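(* Let $f:2^{[k]}\to\mathbb{R}$ be submodular and normalized, and let $\bar f=2^{-k}\sum_{S\subseteq[k]}f(S)$. Then $\bar f\ge f([k])/2$, and $\bar f=f([k])/2$ if and only if $f$ is modular.
   Context: $[k]=\{1,\dots,k\}$. $f$ is submodular if $f(S)+f(T)\ge f(S\cup T)+f(S\cap T)$ for all $S,T\subseteq[k]$, modular if this holds with equality for all $S,T$, normalized if $f(\emptyset)=0$. *)

theory Defs
  imports Complex_Main
begin

definition submodular_on :: "nat \<Rightarrow> (nat set \<Rightarrow> real) \<Rightarrow> bool" where
  "submodular_on k f \<longleftrightarrow>
     (\<forall>S T. S \<subseteq> {1..k} \<longrightarrow> T \<subseteq> {1..k} \<longrightarrow> f S + f T \<ge> f (S \<union> T) + f (S \<inter> T))"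

definition modular_on :: "nat \<Rightarrow> (nat set \<Rightarrow> real) \<Rightarrow> bool" where
  "modular_on k f \<longleftrightarrow>
     (\<forall>S T. S \<subseteq> {1..k} \<longrightarrow> T \<subseteq> {1..k} \<longrightarrow> f S + f T = f (S \<union> T) + f (S \<inter> T))"

definition normalized :: "(nat set \<Rightarrow> real) \<Rightarrow> bool" where
  "normalized f \<longleftrightarrow> f {} = 0"

definition avg_value :: "nat \<Rightarrow> (nat set \<Rightarrow> real) \<Rightarrow> real" where
  "avg_value k f = (\<Sum>S\<in>Pow {1..k}. f S) / 2 ^ k"

end

theory Submission
  imports Defs
begin

theorem lemma6:
  fixes k :: nat and f :: "nat set \<Rightarrow> real"
  assumes "submodular_on k f" and "normalized f"
  shows "avg_value k f \<ge> f {1..k} / 2 \<and>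
         (avg_value k f = f {1..k} / 2 \<longleftrightarrow> modular_on k f)"
proof -
  define V where "V = {1..k::nat}"
  define P where "P = Pow V"
  have finP: "finite P" unfolding P_def V_def by simp
  have cardP: "card P = 2 ^ k" unfolding P_def V_def by (simp add: card_Pow)
  have sub: "\<And>S T. S \<subseteq> V \<Longrightarrow> T \<subseteq> V \<Longrightarrow> f S + f T \<ge> f (S \<union> T) + f (S \<inter> T)"
    using assms(1) unfolding submodular_on_def V_def by blast
  have f0: "f {} = 0" using assms(2) unfolding normalized_def by simp
  define g where "g S = f S + f (V - S) - f V" for S
  have gnn: "\<And>S. S \<in> P \<Longrightarrow> g S \<ge> 0"
  proof -
    fix S assume "S \<in> P"
    hence "S \<subseteq> V" by (simp add: P_def)
    have "f S + f (V - S) \<ge> f (S \<union> (V - S)) + f (S \<inter> (V - S))"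
      by (rule sub) (use \<open>S \<subseteq> V\<close> in auto)
    moreover have "S \<union> (V - S) = V" "S \<inter> (V - S) = {}" using \<open>S \<subseteq> V\<close> by auto
    ultimately show "g S \<ge> 0" by (simp add: g_def f0)
  qed
  have bij: "bij_betw (\<lambda>S. V - S) P P"
    unfolding bij_betw_def inj_on_def P_def by (auto simp: image_def intro!: exI[of _ "V - x" for x])
  have re: "(\<Sum>S\<in>P. f (V - S)) = (\<Sum>S\<in>P. f S)"
    using sum.reindex_bij_betw[OF bij, of f] by simp
  have sg: "(\<Sum>S\<in>P. g S) = 2 * (\<Sum>S\<in>P. f S) - 2 ^ k * f V"
    unfolding g_def using re cardP by (simp add: sum.distrib sum_subtractf)
  have avg: "avg_value k f = (\<Sum>S\<in>P. f S) / 2 ^ k"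
    unfolding avg_value_def P_def V_def by simp
  have key: "avg_value k f - f V / 2 = (\<Sum>S\<in>P. g S) / 2 ^ (k+1)"
    unfolding avg sg by (simp add: field_simps)
  have sgnn: "(\<Sum>S\<in>P. g S) \<ge> 0" using gnn by (simp add: sum_nonneg)
  have part1: "avg_value k f \<ge> f V / 2"
    using key sgnn by (smt (verit) divide_nonneg_pos zero_less_power)
  have eqiff: "avg_value k f = f V / 2 \<longleftrightarrow> (\<forall>S\<in>P. g S = 0)"
  proof -
    have "avg_value k f = f V / 2 \<longleftrightarrow> (\<Sum>S\<in>P. g S) = 0"
    proof -
      have "avg_value k f = f V / 2 \<longleftrightarrow> avg_value k f - f V / 2 = 0" by linarith
      also have "\<dots> \<longleftrightarrow> (\<Sum>S\<in>P. g S) = 0" unfolding key by simp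
      finally show ?thesis .
    qed
    also have "\<dots> \<longleftrightarrow> (\<forall>S\<in>P. g S = 0)" using sum_nonneg_eq_0_iff[OF finP] gnn by blast
    finally show ?thesis .
  qed
  have modiff: "(\<forall>S\<in>P. g S = 0) \<longleftrightarrow> modular_on k f"
  proof
    assume H: "\<forall>S\<in>P. g S = 0"
    hence c: "\<And>X. X \<subseteq> V \<Longrightarrow> f (V - X) = f V - f X"
    proof -
      fix X assume "X \<subseteq> V"
      hence "g X = 0" using H by (simp add: P_def)
      thus "f (V - X) = f V - f X" by (simp add: g_def)
    qed
    show "modular_on k f" unfolding modular_on_def
    proof (intro allI impI)
      fix S T assume S: "S \<subseteq> {1..k}" and T: "T \<subseteq> {1..k}"
      hence SV: "S \<subseteq> V" and TV: "T \<subseteq> V" by (auto simp: V_def)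
      have a: "f S + f T \<ge> f (S \<union> T) + f (S \<inter> T)" using sub SV TV by blast
      have b: "f (V - S) + f (V - T) \<ge> f ((V - S) \<union> (V - T)) + f ((V - S) \<inter> (V - T))"
        by (rule sub) auto
      have e1: "(V - S) \<union> (V - T) = V - (S \<inter> T)" by auto
      have e2: "(V - S) \<inter> (V - T) = V - (S \<union> T)" by auto
      have "f (V - S) + f (V - T) \<ge> f (V - (S \<inter> T)) + f (V - (S \<union> T))"
        using b e1 e2 by simp
      have "f V - f S + (f V - f T) \<ge> f V - f (S \<inter> T) + (f V - f (S \<union> T))"
      proof -
        have "f (V - (S \<inter> T)) = f V - f (S \<inter> T)" using c SV by blast
        moreover have "f (V - (S \<union> T)) = f V - f (S \<union> T)" using c SV TV by blast
        moreover have "f (V - S) = f V - f S" using c SV by blast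
        moreover have "f (V - T) = f V - f T" using c TV by blast
        ultimately show ?thesis using \<open>f (V - S) + f (V - T) \<ge> f (V - (S \<inter> T)) + f (V - (S \<union> T))\<close> by linarith
      qed
      thus "f S + f T = f (S \<union> T) + f (S \<inter> T)" using a by linarith
    qed
  next
    assume M: "modular_on k f"
    show "\<forall>S\<in>P. g S = 0"
    proof
      fix S assume "S \<in> P"
      hence SV: "S \<subseteq> V" by (simp add: P_def)
      have "f S + f (V - S) = f (S \<union> (V - S)) + f (S \<inter> (V - S))"
        using M SV unfolding modular_on_def V_def by blast
      moreover have "S \<union> (V - S) = V" "S \<inter> (V - S) = {}" using SV by auto
      ultimately show "g S = 0" by (simp add: g_def f0)
    qed
  qed
  show ?thesis using part1 eqiff modiff unfolding V_def by simp
qed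

end
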